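(* Let $\ell,d,e$ be nonnegative integers with $e\ge d+m(q-1)$ and $\ell\le m$. Suppose $\mu\in\overline{\mathbb{M}}_d\cap\mathbb{F}_q[x_0,\dots,x_\ell]$ and $\nu\in\overline{\mathbb{M}}^{(\ell)}_e$. Then $\mu\mid\nu$ if and only if $\sigma^{(\ell)}(\mu)\mid\sigma^{(\ell)}(\nu)$.
   Context: $q$ is a prime power, $m$ a positive integer. A monomial $\mu\neq1$ in $x_0,\dots,x_m$ written $x_0^{a_0}\cdots x_k^{a_k}$ with $a_k>0$ is projectively reduced if $a_0,\dots,a_{k-1}\le q-1$; $1$ is projectively reduced. $\overline{\mathbb{M}}$ is the set of projectively reduced monomials and $\overline{\mathbb{M}}_e$ those of degree $e$. $\overline{\mathbb{M}}^{(0)}=\{x_0^a:a\ge0\}$ and for $1\le\ell\le m$, $\overline{\mathbb{M}}^{(\ell)}=\{x_0^{a_0}\cdots x_\ell^{a_\ell}\in\overline{\mathbb{M}}:a_\ell>0\}$; $\overline{\mathbb{M}}^{(\ell)}_e=\overline{\mathbb{M}}^{(\ell)}\cap\overline{\mathbb{M}}_e$. The specialization map $\sigma^{(\ell)}:\overline{\mathbb{M}}\to\overline{\mathbb{M}}\cup\{0\}$ sends $x_0^{a_0}\cdots x_{\ell-1}^{a_{\ell-1}}x_\ell^{a_\ell}$ to $x_0^{a_0}\cdots x_{\ell-1}^{a_{\ell-1}}$ and sends monomials not in $\mathbb{F}_q[x_0,\dots,x_\ell]$ to $0$ (empty products equal $1$). *)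

theory Defs
  imports "HOL-Computational_Algebra.Primes"
begin

text \<open>A monomial in x_0,...,x_m is represented by its exponent vector
  a :: nat => nat, with a i = 0 for i > m.  The monomial 1 is the zero vector.\<close>

definition is_monomial :: "nat \<Rightarrow> (nat \<Rightarrow> nat) \<Rightarrow> bool" where
  "is_monomial m a \<longleftrightarrow> (\<forall>i>m. a i = 0)"

definition mdeg :: "nat \<Rightarrow> (nat \<Rightarrow> nat) \<Rightarrow> nat" where
  "mdeg m a = (\<Sum>i\<le>m. a i)"

definition in_vars :: "nat \<Rightarrow> (nat \<Rightarrow> nat) \<Rightarrow> bool" where
  "in_vars l a \<longleftrightarrow> (\<forall>i>l. a i = 0)"

definition proj_reduced :: "nat \<Rightarrow> nat \<Rightarrow> (nat \<Rightarrow> nat) \<Rightarrow> bool" where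
  "proj_reduced q m a \<longleftrightarrow> is_monomial m a \<and>
     (a = (\<lambda>_. 0) \<or>
      (\<exists>k\<le>m. a k > 0 \<and> (\<forall>i>k. a i = 0) \<and> (\<forall>i<k. a i \<le> q - 1)))"

definition PRM_deg :: "nat \<Rightarrow> nat \<Rightarrow> nat \<Rightarrow> (nat \<Rightarrow> nat) set" where
  "PRM_deg q m e = {a. proj_reduced q m a \<and> mdeg m a = e}"

definition PRM_level :: "nat \<Rightarrow> nat \<Rightarrow> nat \<Rightarrow> (nat \<Rightarrow> nat) set" where
  "PRM_level q m l =
     (if l = 0 then {a. \<forall>i>0. a i = 0}
      else {a. proj_reduced q m a \<and> in_vars l a \<and> a l > 0})"

definition PRM_level_deg :: "nat \<Rightarrow> nat \<Rightarrow> nat \<Rightarrow> nat \<Rightarrow> (nat \<Rightarrow> nat) set" where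
  "PRM_level_deg q m l e = PRM_level q m l \<inter> PRM_deg q m e"

text \<open>Specialization map sigma^(l); the value 0 (zero polynomial) is represented by None.\<close>
definition sigma :: "nat \<Rightarrow> (nat \<Rightarrow> nat) \<Rightarrow> (nat \<Rightarrow> nat) option" where
  "sigma l a = (if in_vars l a then Some (a(l := 0)) else None)"

fun mdvd :: "(nat \<Rightarrow> nat) option \<Rightarrow> (nat \<Rightarrow> nat) option \<Rightarrow> bool" where
  "mdvd _ None = True"
| "mdvd None (Some _) = False"
| "mdvd (Some a) (Some b) = (\<forall>i. a i \<le> b i)"

definition prime_power :: "nat \<Rightarrow> bool" where
  "prime_power q \<longleftrightarrow> (\<exists>p k. prime p \<and> k > 0 \<and> q = p ^ k)"

end

theory Submission
  imports Defs
begin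

lemma key:
  fixes q m l d e :: nat and \<mu> \<nu> :: "nat \<Rightarrow> nat"
  assumes "e \<ge> d + m * (q - 1)" and "l \<le> m"
    and "\<mu> \<in> PRM_deg q m d"
    and "\<nu> \<in> PRM_level_deg q m l e"
  shows "\<mu> l \<le> \<nu> l"
proof -
  have mu: "mdeg m \<mu> = d" using assms(3) by (simp add: PRM_deg_def)
  have "\<mu> l \<le> (\<Sum>i\<le>m. \<mu> i)"
    by (rule member_le_sum) (use assms(2) in auto)
  hence ml: "\<mu> l \<le> d" using mu by (simp add: mdeg_def)
  have nu: "(\<Sum>i\<le>m. \<nu> i) = e" using assms(4)
    by (simp add: PRM_level_deg_def PRM_deg_def mdeg_def)
  have zero: "\<forall>i>l. \<nu> i = 0" using assms(4)
    by (auto simp: PRM_level_deg_def PRM_level_def in_vars_def split: if_splits)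
  have "(\<Sum>i\<le>m. \<nu> i) = (\<Sum>i\<le>l. \<nu> i)"
    by (rule sum.mono_neutral_left[symmetric]) (use assms(2) zero in auto)
  also have "\<dots> = (\<Sum>i<l. \<nu> i) + \<nu> l"
    by (simp add: lessThan_Suc_atMost[symmetric])
  finally have split: "(\<Sum>i<l. \<nu> i) + \<nu> l = e" using nu by simp
  have small: "(\<Sum>i<l. \<nu> i) \<le> l * (q - 1)"
  proof (cases "l = 0")
    case True then show ?thesis by simp
  next
    case False
    from assms(4) False have pr: "proj_reduced q m \<nu>" and pos: "\<nu> l > 0"
      by (auto simp: PRM_level_deg_def PRM_level_def)
    have "\<forall>i<l. \<nu> i \<le> q - 1"
    proof -
      from pr pos obtain k where k: "k \<le> m" "\<nu> k > 0" "\<forall>i>k. \<nu> i = 0" "\<forall>i<k. \<nu> i \<le> q - 1"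
        unfolding proj_reduced_def by (metis less_irrefl)
      have "k \<ge> l" using k(3) pos by (metis not_le less_irrefl)
      moreover have "k \<le> l" using zero k(2) by (metis not_le less_irrefl)
      ultimately have "k = l" by simp
      thus ?thesis using k(4) by simp
    qed
    hence "(\<Sum>i<l. \<nu> i) \<le> (\<Sum>i<l. q - 1)" by (intro sum_mono) auto
    thus ?thesis by simp
  qed
  have "l * (q - 1) \<le> m * (q - 1)" using assms(2) by simp
  thus ?thesis using split small ml assms(1) by linarith
qed

theorem proposition4p1:
  fixes q m l d e :: nat and \<mu> \<nu> :: "nat \<Rightarrow> nat"
  assumes "prime_power q" and "m > 0"
    and "e \<ge> d + m * (q - 1)" and "l \<le> m"
    and "\<mu> \<in> PRM_deg q m d" and "in_vars l \<mu>"
    and "\<nu> \<in> PRM_level_deg q m l e"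
  shows "mdvd (Some \<mu>) (Some \<nu>) \<longleftrightarrow> mdvd (sigma l \<mu>) (sigma l \<nu>)"
proof -
  have k: "\<mu> l \<le> \<nu> l" using key[OF assms(3,4,5,7)] .
  have nv: "in_vars l \<nu>" using assms(7)
    by (auto simp: PRM_level_deg_def PRM_level_def in_vars_def split: if_splits)
  have "mdvd (sigma l \<mu>) (sigma l \<nu>) \<longleftrightarrow> (\<forall>i. i \<noteq> l \<longrightarrow> \<mu> i \<le> \<nu> i)"
    using assms(6) nv by (auto simp: sigma_def)
  thus ?thesis using k by (metis mdvd.simps(3))
qed

end
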